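(* Let $k \ge 3$ and let $G$ be a connected $k$-regular graph of order $n$ with $G \not\cong K_{k,k}$. If $G$ is not bipartite, then $\gamma_{\rm gr}^t(G) \ge \dfrac{n + \lceil k/2 \rceil - 2}{k-1}$; if $G$ is bipartite, then $\gamma_{\rm gr}^t(G) \ge \dfrac{n + 2\lceil k/2 \rceil - 4}{k-1}$.
   Context: $N(v)$ denotes the open neighborhood of $v$. A sequence $S=(v_1,\ldots,v_k)$ of distinct vertices of a graph $G$ without isolated vertices is a legal sequence if $N(v_i)\setminus \bigcup_{j=1}^{i-1} N(v_j)\neq\emptyset$ for every $i\in\{2,\ldots,k\}$, and a total dominating sequence if moreover $\{v_1,\ldots,v_k\}$ is a total dominating set of $G$. $\gamma_{\rm gr}^t(G)$ is the maximum length of a total dominating sequence of $G$. *)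

theory Defs
  imports Main "HOL-Library.Extended_Nat"
begin

definition simple_graph :: "'a set \<Rightarrow> ('a \<Rightarrow> 'a \<Rightarrow> bool) \<Rightarrow> bool" where
  "simple_graph V E \<longleftrightarrow> finite V \<and> (\<forall>u v. E u v \<longrightarrow> u \<in> V \<and> v \<in> V) \<and>
     (\<forall>u v. E u v \<longrightarrow> E v u) \<and> (\<forall>v. \<not> E v v)"

definition nbhd :: "'a set \<Rightarrow> ('a \<Rightarrow> 'a \<Rightarrow> bool) \<Rightarrow> 'a \<Rightarrow> 'a set" where
  "nbhd V E v = {u \<in> V. E v u}"

definition regular :: "'a set \<Rightarrow> ('a \<Rightarrow> 'a \<Rightarrow> bool) \<Rightarrow> nat \<Rightarrow> bool" where
  "regular V E k \<longleftrightarrow> (\<forall>v \<in> V. card (nbhd V E v) = k)"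

definition connected_graph :: "'a set \<Rightarrow> ('a \<Rightarrow> 'a \<Rightarrow> bool) \<Rightarrow> bool" where
  "connected_graph V E \<longleftrightarrow> V \<noteq> {} \<and> (\<forall>u \<in> V. \<forall>v \<in> V. (u, v) \<in> {(x, y). E x y}\<^sup>*)"

definition bipartite :: "'a set \<Rightarrow> ('a \<Rightarrow> 'a \<Rightarrow> bool) \<Rightarrow> bool" where
  "bipartite V E \<longleftrightarrow> (\<exists>A \<subseteq> V. \<forall>u v. E u v \<longrightarrow> (u \<in> A \<longleftrightarrow> v \<notin> A))"

definition is_complete_bipartite_kk :: "'a set \<Rightarrow> ('a \<Rightarrow> 'a \<Rightarrow> bool) \<Rightarrow> nat \<Rightarrow> bool" where
  "is_complete_bipartite_kk V E k \<longleftrightarrow> (\<exists>A B. A \<inter> B = {} \<and> A \<union> B = V \<and> card A = k \<and> card B = k \<and>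
      (\<forall>u v. E u v \<longleftrightarrow> (u \<in> A \<and> v \<in> B) \<or> (u \<in> B \<and> v \<in> A)))"

definition legal_sequence :: "'a set \<Rightarrow> ('a \<Rightarrow> 'a \<Rightarrow> bool) \<Rightarrow> 'a list \<Rightarrow> bool" where
  "legal_sequence V E S \<longleftrightarrow> distinct S \<and> set S \<subseteq> V \<and>
     (\<forall>i. 1 \<le> i \<and> i < length S \<longrightarrow>
        nbhd V E (S ! i) - (\<Union>j<i. nbhd V E (S ! j)) \<noteq> {})"

definition total_dominating_set :: "'a set \<Rightarrow> ('a \<Rightarrow> 'a \<Rightarrow> bool) \<Rightarrow> 'a set \<Rightarrow> bool" where
  "total_dominating_set V E D \<longleftrightarrow> D \<subseteq> V \<and> (\<forall>v \<in> V. \<exists>u \<in> D. E u v)"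

definition total_dominating_sequence :: "'a set \<Rightarrow> ('a \<Rightarrow> 'a \<Rightarrow> bool) \<Rightarrow> 'a list \<Rightarrow> bool" where
  "total_dominating_sequence V E S \<longleftrightarrow> legal_sequence V E S \<and> total_dominating_set V E (set S)"

definition total_grundy_dom :: "'a set \<Rightarrow> ('a \<Rightarrow> 'a \<Rightarrow> bool) \<Rightarrow> nat" where
  "total_grundy_dom V E = Max (length ` {S. total_dominating_sequence V E S})"

end

theory Submission
  imports Defs
begin

lemma ceil_half: "nat \<lceil>real k / 2\<rceil> = k - k div 2"
proof -
  have "\<lceil>real_of_int (int k) / real_of_int 2\<rceil> = - (- int k div 2)" by (rule ceiling_divide_eq_div)
  then have a: "\<lceil>real k / 2\<rceil> = - (- int k div 2)" by simp
  have b: "- (- int k div 2) = int (k - k div 2)" by presburger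
  show ?thesis unfolding a b by simp
qed

lemma snoc_all:
  "(\<forall>i. 1 \<le> i \<and> i < length (S@[x]) \<longrightarrow> Q ((S@[x])!i) (\<Union>j<i. f ((S@[x])!j))) \<longleftrightarrow>
   (\<forall>i. 1 \<le> i \<and> i < length S \<longrightarrow> Q (S!i) (\<Union>j<i. f (S!j))) \<and> (S \<noteq> [] \<longrightarrow> Q x (\<Union> (f ` set S)))"
proof -
  have U: "(\<Union>j<i. f ((S@[x])!j)) = (\<Union>j<i. f (S!j))" if "i \<le> length S" for i
    using that by (intro SUP_cong) (auto simp: nth_append)
  have W: "(\<Union>j<length S. f (S!j)) = \<Union> (f ` set S)"
    by (auto simp: in_set_conv_nth) (meson nth_mem)
  have X: "(S@[x])!i = S!i" if "i < length S" for i using that by (simp add: nth_append)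
  show ?thesis
  proof
    assume H: "\<forall>i. 1 \<le> i \<and> i < length (S@[x]) \<longrightarrow> Q ((S@[x])!i) (\<Union>j<i. f ((S@[x])!j))"
    have "Q (S!i) (\<Union>j<i. f (S!j))" if "1 \<le> i" "i < length S" for i
      using H[rule_format, of i] that U[of i] X[of i] by simp
    moreover have "Q x (\<Union> (f ` set S))" if "S \<noteq> []"
      using H[rule_format, of "length S"] that U[of "length S"] W by (simp add: Suc_leI)
    ultimately show "(\<forall>i. 1 \<le> i \<and> i < length S \<longrightarrow> Q (S!i) (\<Union>j<i. f (S!j))) \<and> (S \<noteq> [] \<longrightarrow> Q x (\<Union> (f ` set S)))"
      by blast
  next
    assume H: "(\<forall>i. 1 \<le> i \<and> i < length S \<longrightarrow> Q (S!i) (\<Union>j<i. f (S!j))) \<and> (S \<noteq> [] \<longrightarrow> Q x (\<Union> (f ` set S)))"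
    show "\<forall>i. 1 \<le> i \<and> i < length (S@[x]) \<longrightarrow> Q ((S@[x])!i) (\<Union>j<i. f ((S@[x])!j))"
    proof (intro allI impI)
      fix i assume i: "1 \<le> i \<and> i < length (S@[x])"
      show "Q ((S@[x])!i) (\<Union>j<i. f ((S@[x])!j))"
      proof (cases "i < length S")
        case True
        then show ?thesis using H i U[of i] X[of i] by simp
      next
        case False
        then have "i = length S" using i by simp
        then show ?thesis using H i U[of i] W by auto
      qed
    qed
  qed
qed

locale rg =
  fixes V :: "'a set" and E :: "'a \<Rightarrow> 'a \<Rightarrow> bool" and k :: nat
  assumes sg: "simple_graph V E" and reg: "regular V E k" and k3: "k \<ge> 3"
begin

abbreviation N where "N \<equiv> nbhd V E"

definition DD :: "'a list \<Rightarrow> 'a set" where "DD S = \<Union> (N ` set S)"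

definition valid :: "'a list \<Rightarrow> bool" where
  "valid S \<longleftrightarrow> (\<forall>i. 1 \<le> i \<and> i < length S \<longrightarrow> N (S!i) \<inter> (\<Union>j<i. N (S!j)) \<noteq> {})"

lemma finV: "finite V" using sg by (simp add: simple_graph_def)
lemma Ein: "E u v \<Longrightarrow> u \<in> V \<and> v \<in> V" using sg by (simp add: simple_graph_def)
lemma Esym: "E u v \<Longrightarrow> E v u" using sg by (simp add: simple_graph_def)
lemma Eirr: "\<not> E v v" using sg by (simp add: simple_graph_def)
lemma N_sub: "N v \<subseteq> V" by (auto simp: nbhd_def)
lemma mem_N: "u \<in> N v \<longleftrightarrow> E v u" using Ein by (auto simp: nbhd_def)
lemma fin_N: "finite (N v)" using N_sub finV finite_subset by blast
lemma card_N: "v \<in> V \<Longrightarrow> card (N v) = k" using reg by (simp add: regular_def)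
lemma N_ne: "v \<in> V \<Longrightarrow> N v \<noteq> {}" using card_N k3 by fastforce
lemma DD_snoc: "DD (S@[x]) = DD S \<union> N x" by (auto simp: DD_def)
lemma DD_app: "DD (S@T) = DD S \<union> DD T" by (auto simp: DD_def)
lemma DD_sub: "DD S \<subseteq> V" using N_sub by (auto simp: DD_def)
lemma fin_DD: "finite (DD S)" using DD_sub finV finite_subset by blast
lemma N_DD: "x \<in> set S \<Longrightarrow> N x \<subseteq> DD S" by (auto simp: DD_def)

lemma legal_snoc: "legal_sequence V E (S@[x]) \<longleftrightarrow>
   legal_sequence V E S \<and> x \<notin> set S \<and> x \<in> V \<and> (S \<noteq> [] \<longrightarrow> N x - DD S \<noteq> {})"
  unfolding legal_sequence_def DD_def
  using snoc_all[of S x "\<lambda>a B. N a - B \<noteq> {}" N] by auto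

lemma valid_snoc: "valid (S@[x]) \<longleftrightarrow> valid S \<and> (S \<noteq> [] \<longrightarrow> N x \<inter> DD S \<noteq> {})"
  unfolding valid_def DD_def
  using snoc_all[of S x "\<lambda>a B. N a \<inter> B \<noteq> {}" N] by auto

lemma legal_Nil: "legal_sequence V E []" by (simp add: legal_sequence_def)
lemma valid_Nil: "valid []" by (simp add: valid_def)

lemma card_DD_snoc: "card (DD (S@[x])) = card (DD S) + card (N x - DD S)"
proof -
  have "DD (S@[x]) = DD S \<union> (N x - DD S)" by (auto simp: DD_snoc)
  moreover have "card (DD S \<union> (N x - DD S)) = card (DD S) + card (N x - DD S)"
    by (rule card_Un_disjoint) (auto intro: fin_DD fin_N)
  ultimately show ?thesis by simp
qed

lemma count:
  assumes "valid (S1 @ S2)" "S1 \<noteq> []" "set S2 \<subseteq> V"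
  shows "card (DD (S1@S2)) \<le> card (DD S1) + (k-1) * length S2"
  using assms
proof (induction S2 rule: rev_induct)
  case Nil
  then show ?case by simp
next
  case (snoc x S2)
  have v: "valid (S1 @ S2)" and ne: "N x \<inter> DD (S1@S2) \<noteq> {}"
    using snoc.prems(1) snoc.prems(2) valid_snoc[of "S1@S2" x] by auto
  have IH: "card (DD (S1@S2)) \<le> card (DD S1) + (k-1) * length S2"
    using snoc.IH v snoc.prems by auto
  have xV: "x \<in> V" using snoc.prems(3) by auto
  have "card (N x \<inter> DD (S1@S2)) \<ge> 1"
    using ne fin_N by (simp add: Suc_leI card_gt_0_iff)
  moreover have "card (N x - DD (S1@S2)) = card (N x) - card (N x \<inter> DD (S1@S2))"
    using fin_N by (simp add: card_Diff_subset_Int)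
  ultimately have "card (N x - DD (S1@S2)) \<le> k - 1" using card_N[OF xV] by simp
  then show ?case using IH card_DD_snoc[of "S1@S2" x] by simp
qed

inductive wk :: "'a \<Rightarrow> bool \<Rightarrow> 'a \<Rightarrow> bool" for d where
  w0: "wk d True d"
| ws: "wk d b u \<Longrightarrow> E u w \<Longrightarrow> wk d (\<not> b) w"

lemma wk_V: "wk d b v \<Longrightarrow> d \<in> V \<Longrightarrow> v \<in> V"
  by (induction rule: wk.induct) (auto dest: Ein)

lemma wk_trans: "wk c b2 e \<Longrightarrow> wk a b1 c \<Longrightarrow> wk a (b1 = b2) e"
proof (induction rule: wk.induct)
  case w0
  then show ?case by simp
next
  case (ws b u w)
  then have "wk a (\<not> (b1 = b)) w" using wk.ws by blast
  then show ?case by (metis (full_types))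
qed

lemma wk_edge: "E d x \<Longrightarrow> wk d False x"
  using wk.ws[OF wk.w0] by simp

lemma wk_rev: "wk d b v \<Longrightarrow> wk v b d"
proof (induction rule: wk.induct)
  case w0
  then show ?case by (rule wk.w0)
next
  case (ws b u w)
  have "wk w False u" using ws.hyps(2) Esym wk_edge by blast
  from wk_trans[OF ws.IH this] show ?case by simp
qed

lemma reach_wk: "(u,v) \<in> {(x,y). E x y}\<^sup>* \<Longrightarrow> \<exists>b. wk u b v"
proof (induction rule: rtrancl_induct)
  case base
  then show ?case using wk.w0 by blast
next
  case (step y z)
  then show ?case using wk.ws by blast
qed

lemma stuck:
  assumes nog: "\<forall>x a b. E x a \<longrightarrow> E x b \<longrightarrow> a \<in> D \<longrightarrow> b \<in> D" and dD: "d \<in> D"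
  shows "wk d b v \<Longrightarrow> (b \<longrightarrow> v \<in> D) \<and> (\<not> b \<longrightarrow> (\<forall>w. E v w \<longrightarrow> w \<in> D))"
proof (induction rule: wk.induct)
  case w0
  then show ?case using dD by simp
next
  case (ws b u w)
  show ?case
  proof (cases b)
    case True
    then have "u \<in> D" using ws.IH by simp
    then have "\<forall>w'. E w w' \<longrightarrow> w' \<in> D" using nog ws.hyps(2) Esym by blast
    then show ?thesis using True by simp
  next
    case False
    then show ?thesis using ws.IH ws.hyps(2) by simp
  qed
qed

definition good :: "'a set \<Rightarrow> 'a list \<Rightarrow> bool" where
  "good C S \<longleftrightarrow> legal_sequence V E S \<and> valid S \<and> set S \<subseteq> C"

lemma good_snoc: "good C (S@[x]) \<longleftrightarrow> good C S \<and> x \<notin> set S \<and> x \<in> V \<and> x \<in> C \<and>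
   (S \<noteq> [] \<longrightarrow> N x - DD S \<noteq> {} \<and> N x \<inter> DD S \<noteq> {})"
  unfolding good_def using legal_snoc valid_snoc by auto

lemma good_single: "x \<in> V \<Longrightarrow> x \<in> C \<Longrightarrow> good C [x]"
  using good_snoc[of C "[]" x] by (simp add: good_def legal_Nil valid_Nil)

lemma fin_lists: "finite {S. legal_sequence V E S}"
proof -
  have "{S. legal_sequence V E S} \<subseteq> {xs. set xs \<subseteq> V \<and> distinct xs}"
    by (auto simp: legal_sequence_def)
  then show ?thesis using finite_subset_distinct[OF finV] finite_subset by blast
qed

lemma max_list:
  assumes "G \<subseteq> {S. legal_sequence V E S}" "S0 \<in> G"
  obtains S where "S \<in> G" "\<And>S'. S' \<in> G \<Longrightarrow> length S' \<le> length S"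
proof -
  have fG: "finite G" using assms(1) fin_lists finite_subset by blast
  have "finite (length ` G)" "length ` G \<noteq> {}" using fG assms(2) by auto
  then have "Max (length ` G) \<in> length ` G" by (rule Max_in)
  then obtain S where S: "S \<in> G" "length S = Max (length ` G)" by auto
  have "length S' \<le> length S" if "S' \<in> G" for S'
    using S(2) Max_ge[of "length ` G" "length S'"] \<open>finite (length ` G)\<close> that by simp
  then show ?thesis using that S(1) by blast
qed

lemma arith_fin:
  assumes "c \<le> k + k div 2 + (k-1)*m"
  shows "c + (k - k div 2) \<le> (k-1)*(m+2) + 2"
proof -
  have "(k-1)*(m+2) = (k-1)*m + (k-1)*2" by (rule distrib_left)
  moreover have "k div 2 \<le> k" by simp
  ultimately show ?thesis using assms k3 by linarith
qed

lemma extend: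
  assumes H1: "\<forall>x\<in>C. N x \<subseteq> T" and H2: "\<forall>t\<in>T. \<forall>w. E t w \<longrightarrow> w \<in> C"
    and H3: "\<forall>d\<in>T. \<forall>t\<in>T. wk d True t"
    and g: "good C S" and ne: "S \<noteq> []" and nT: "DD S \<noteq> T"
  shows "\<exists>x. good C (S@[x])"
proof -
  have sub: "DD S \<subseteq> T" using g H1 by (auto simp: good_def DD_def)
  obtain s where s: "s \<in> set S" using ne by (cases S) auto
  have sV: "s \<in> V" using g s by (auto simp: good_def legal_sequence_def)
  obtain d where d: "d \<in> N s" using N_ne[OF sV] by blast
  have dD: "d \<in> DD S" using d s N_DD by blast
  obtain t where t: "t \<in> T" "t \<notin> DD S" using sub nT by blast
  have "\<exists>x a b. E x a \<and> E x b \<and> a \<in> DD S \<and> b \<notin> DD S"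
  proof (rule ccontr)
    assume "\<not> ?thesis"
    then have nog: "\<forall>x a b. E x a \<longrightarrow> E x b \<longrightarrow> a \<in> DD S \<longrightarrow> b \<in> DD S" by blast
    have "wk d True t" using H3 dD sub t by blast
    from stuck[OF nog dD this] t show False by simp
  qed
  then obtain x a b where xab: "E x a" "E x b" "a \<in> DD S" "b \<notin> DD S" by blast
  have xC: "x \<in> C" using H2 xab(1,3) sub Esym by blast
  have xV: "x \<in> V" using Ein xab(1) by blast
  have xS: "x \<notin> set S" using N_DD xab(2,4) mem_N by blast
  have "b \<in> N x - DD S" "a \<in> N x \<inter> DD S" using xab mem_N by auto
  then have "good C (S@[x])" using good_snoc g xC xV xS ne by blast
  then show ?thesis by blast
qed

lemma card_eq_N: "x \<in> V \<Longrightarrow> y \<in> V \<Longrightarrow> N x \<subseteq> N y \<Longrightarrow> N x = N y"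
  using card_N fin_N card_subset_eq by metis

lemma phase:
  assumes TV: "T \<subseteq> V" and CV: "C \<subseteq> V"
    and H1: "\<forall>x\<in>C. N x \<subseteq> T" and H2: "\<forall>t\<in>T. \<forall>w. E t w \<longrightarrow> w \<in> C"
    and H3: "\<forall>d\<in>T. \<forall>t\<in>T. wk d True t" and Tne: "T \<noteq> {}"
    and noK: "\<not>(\<exists>A B. A \<inter> B = {} \<and> card A = k \<and> card B = k \<and> (\<forall>a\<in>A. N a = B) \<and> (\<forall>b\<in>B. N b = A))"
  shows "\<exists>S. legal_sequence V E S \<and> set S \<subseteq> C \<and> DD S = T \<and> card T + (k - k div 2) \<le> (k-1) * length S + 2"
proof -
  obtain t0 where t0: "t0 \<in> T" using Tne by blast
  obtain w0 where "w0 \<in> N t0" using N_ne t0 TV by blast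
  then have x0C: "w0 \<in> C" using H2 t0 mem_N by blast
  show ?thesis
  proof (cases "\<exists>x\<in>C. \<exists>y\<in>C. N x \<noteq> N y \<and> k - k div 2 \<le> card (N x \<inter> N y)")
    case True
    then obtain x y where xy: "x \<in> C" "y \<in> C" "N x \<noteq> N y" "k - k div 2 \<le> card (N x \<inter> N y)" by blast
    have xV: "x \<in> V" and yV: "y \<in> V" using xy CV by auto
    have d1: "N y - N x \<noteq> {}" using card_eq_N[OF yV xV] xy(3) by blast
    have "card (N x \<inter> N y) \<ge> 1" using xy(4) k3 by linarith
    then have "N x \<inter> N y \<noteq> {}" by (metis card.empty not_one_le_zero)
    then have d2: "N y \<inter> N x \<noteq> {}" by blast
    have xny: "x \<noteq> y" using xy(3) by blast
    have g2: "good C [x,y]"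
      using good_snoc[of C "[x]" y] good_single[OF xV xy(1)] yV xy(2) d1 d2 xny
      by (simp add: DD_def)
    define G where "G = {S. good C S \<and> take 2 S = [x,y]}"
    have GL: "G \<subseteq> {S. legal_sequence V E S}" by (auto simp: G_def good_def)
    have "[x,y] \<in> G" using g2 by (simp add: G_def)
    then obtain S where S: "S \<in> G" and mx: "\<And>S'. S' \<in> G \<Longrightarrow> length S' \<le> length S"
      using max_list[OF GL] by blast
    have gS: "good C S" and tk: "take 2 S = [x,y]" using S by (auto simp: G_def)
    have lS: "length S \<ge> 2" using tk by (metis length_take min.absorb_iff2 min_def length_Cons list.size(3) numeral_2_eq_2 nat_le_linear)
    have Sne: "S \<noteq> []" using tk by auto
    have DDS: "DD S = T"
    proof (rule ccontr)
      assume "DD S \<noteq> T"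
      then obtain z where z: "good C (S@[z])" using extend[OF H1 H2 H3 gS Sne] by blast
      have "take 2 (S@[z]) = [x,y]" using tk lS by simp
      then have "S@[z] \<in> G" using z by (simp add: G_def)
      from mx[OF this] show False by simp
    qed
    have Sdec: "S = [x,y] @ drop 2 S" using tk by (metis append_take_drop_id)
    have vS: "valid S" and sC: "set S \<subseteq> C" and lg: "legal_sequence V E S" using gS by (auto simp: good_def)
    have "card (DD ([x,y] @ drop 2 S)) \<le> card (DD [x,y]) + (k-1) * length (drop 2 S)"
      by (rule count) (use vS sC CV Sdec in \<open>auto dest: in_set_dropD\<close>)
    then have c1: "card T \<le> card (DD [x,y]) + (k-1) * (length S - 2)" using DDS Sdec by simp
    have "card (DD [x,y]) = card (DD [x]) + card (N y - DD [x])"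
      using card_DD_snoc[of "[x]" y] by simp
    moreover have "DD [x] = N x" by (simp add: DD_def)
    moreover have "card (N y - N x) = card (N y) - card (N y \<inter> N x)"
      using fin_N by (simp add: card_Diff_subset_Int)
    moreover have "N y \<inter> N x = N x \<inter> N y" by blast
    ultimately have "card (DD [x,y]) \<le> k + k div 2" using card_N[OF xV] card_N[OF yV] xy(4) by simp
    then have "card T \<le> k + k div 2 + (k-1) * (length S - 2)" using c1 by simp
    then have X: "card T + (k - k div 2) \<le> (k-1) * (length S - 2 + 2) + 2" by (rule arith_fin)
    have Y: "length S - 2 + 2 = length S" using lS by simp
    have "card T + (k - k div 2) \<le> (k-1) * length S + 2" using X unfolding Y .
    then show ?thesis using lg sC DDS by blast
  next
    case False
    then have noPair: "\<And>x y. x \<in> C \<Longrightarrow> y \<in> C \<Longrightarrow> N x \<noteq> N y \<Longrightarrow> card (N x \<inter> N y) < k - k div 2"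
      by (meson not_le)
    define G where "G = {S. good C S \<and> S \<noteq> []}"
    have GL: "G \<subseteq> {S. legal_sequence V E S}" by (auto simp: G_def good_def)
    have "[w0] \<in> G" using good_single x0C CV by (auto simp: G_def)
    then obtain S where S: "S \<in> G" and mx: "\<And>S'. S' \<in> G \<Longrightarrow> length S' \<le> length S"
      using max_list[OF GL] by blast
    have gS: "good C S" and Sne: "S \<noteq> []" using S by (auto simp: G_def)
    have DDS: "DD S = T"
    proof (rule ccontr)
      assume "DD S \<noteq> T"
      then obtain z where z: "good C (S@[z])" using extend[OF H1 H2 H3 gS Sne] by blast
      then have "S@[z] \<in> G" by (simp add: G_def)
      from mx[OF this] show False by simp
    qed
    obtain S0 l where Sdec: "S = S0 @ [l]" using Sne by (metis rev_exhaust)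
    have gS0: "good C S0" and lS0: "l \<notin> set S0" and lV: "l \<in> V" and lC: "l \<in> C"
      using gS good_snoc[of C S0 l] Sdec by auto
    define F where "F = N l - DD S0"
    have TF: "T = DD S0 \<union> F" using DDS Sdec by (auto simp: F_def DD_snoc)
    have FT: "F \<subseteq> T" using TF by blast
    have cardF: "card F \<le> k div 2"
    proof (rule ccontr)
      assume big: "\<not> card F \<le> k div 2"
      have split: "F \<subseteq> N w" if wC: "w \<in> C" and meet: "N w \<inter> F \<noteq> {}" for w
      proof (rule ccontr)
        assume notsub: "\<not> F \<subseteq> N w"
        have wV: "w \<in> V" using wC CV by blast
        have "N w \<subseteq> T" using H1 wC by blast
        have nF: "\<not> N w \<subseteq> F"
        proof
          assume "N w \<subseteq> F"
          then have "N w \<subseteq> N l" by (auto simp: F_def)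
          then have "N w = N l" using card_eq_N wV lV by blast
          then show False using notsub by (auto simp: F_def)
        qed
        then have m0: "N w \<inter> DD S0 \<noteq> {}" using \<open>N w \<subseteq> T\<close> TF by blast
        have m1: "N w - DD S0 \<noteq> {}" using meet by (auto simp: F_def)
        have wS0: "w \<notin> set S0" using N_DD m1 by blast
        have g1: "good C (S0@[w])" using good_snoc[of C S0 w] gS0 wS0 wV wC m0 m1 by blast
        have lw: "l \<noteq> w" using notsub by (auto simp: F_def)
        have e1: "N l - DD (S0@[w]) \<noteq> {}" using notsub by (auto simp: F_def DD_snoc)
        have e2: "N l \<inter> DD (S0@[w]) \<noteq> {}" using meet by (auto simp: F_def DD_snoc)
        have "good C ((S0@[w])@[l])" using good_snoc[of C "S0@[w]" l] g1 lS0 lw lV lC e1 e2 by auto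
        then have "(S0@[w])@[l] \<in> G" by (simp add: G_def)
        from mx[OF this] Sdec show False by simp
      qed
      have "F \<noteq> {}" using big by (metis card.empty zero_le)
      then obtain u where uF: "u \<in> F" by blast
      have uT: "u \<in> T" using uF FT by blast
      have uV: "u \<in> V" using uT TV by blast
      have NuC: "w \<in> C" if "w \<in> N u" for w using that H2 uT mem_N by blast
      have FNw: "F \<subseteq> N w" if "w \<in> N u" for w
      proof -
        have "u \<in> N w" using that mem_N Esym by blast
        then show ?thesis using split NuC that uF by blast
      qed
      have eq: "N w = N w'" if "w \<in> N u" "w' \<in> N u" for w w'
      proof (rule ccontr)
        assume ne: "N w \<noteq> N w'"
        have "F \<subseteq> N w \<inter> N w'" using FNw that by blast
        then have "card F \<le> card (N w \<inter> N w')" using fin_N by (meson card_mono finite_Int)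
        then have "k - k div 2 \<le> card (N w \<inter> N w')" using big by linarith
        then show False using noPair[OF NuC[OF that(1)] NuC[OF that(2)] ne] by linarith
      qed
      obtain w1 where w1: "w1 \<in> N u" using N_ne uV by blast
      have w1V: "w1 \<in> V" using w1 N_sub by blast
      define A where "A = N w1"
      define B where "B = N u"
      have hB: "\<forall>b\<in>B. N b = A" unfolding A_def B_def using eq[OF _ w1] by blast
      have hA: "\<forall>a\<in>A. N a = B"
      proof
        fix a assume aA: "a \<in> A"
        have aV: "a \<in> V" using aA N_sub by (auto simp: A_def)
        have "B \<subseteq> N a"
        proof
          fix b assume bB: "b \<in> B"
          then have "a \<in> N b" using hB aA by blast
          then show "b \<in> N a" using mem_N Esym by blast
        qed
        then show "N a = B" using card_eq_N uV aV by (metis B_def)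
      qed
      have AB: "A \<inter> B = {}"
      proof (rule ccontr)
        assume "A \<inter> B \<noteq> {}"
        then obtain z where "z \<in> A" "z \<in> B" by blast
        then have "z \<in> N z" using hA by blast
        then show False using mem_N Eirr by blast
      qed
      have "card A = k" "card B = k" using card_N w1V uV by (auto simp: A_def B_def)
      then show False using noK AB hA hB by blast
    qed
    have S0ne: "S0 \<noteq> []"
    proof
      assume "S0 = []"
      then have "F = N l" by (simp add: F_def DD_def)
      then show False using cardF card_N[OF lV] k3 by simp
    qed
    then obtain s S1 where S0dec: "S0 = [s] @ S1" by (cases S0) auto
    have vS0: "valid S0" and sC0: "set S0 \<subseteq> C" and lg: "legal_sequence V E S" using gS gS0 by (auto simp: good_def)
    have sV: "s \<in> V" using sC0 CV S0dec by auto
    have "card (DD ([s] @ S1)) \<le> card (DD [s]) + (k-1) * length S1"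
      by (rule count) (use vS0 sC0 CV S0dec in auto)
    moreover have "card (DD [s]) = k" using card_N[OF sV] by (simp add: DD_def)
    ultimately have c0: "card (DD S0) \<le> k + (k-1) * length S1" using S0dec by simp
    have "card T = card (DD S0) + card F" using card_DD_snoc[of S0 l] DDS Sdec by (simp add: F_def)
    then have "card T \<le> k + k div 2 + (k-1) * length S1" using c0 cardF by simp
    then have "card T + (k - k div 2) \<le> (k-1) * (length S1 + 2) + 2" by (rule arith_fin)
    moreover have "length S = length S1 + 2" using Sdec S0dec by simp
    ultimately show ?thesis using lg gS DDS by (intro exI[of _ S]) (simp add: good_def)
  qed
qed

lemma noK_lemma:
  assumes conn: "connected_graph V E" and nk: "\<not> is_complete_bipartite_kk V E k"
  shows "\<not>(\<exists>A B. A \<inter> B = {} \<and> card A = k \<and> card B = k \<and> (\<forall>a\<in>A. N a = B) \<and> (\<forall>b\<in>B. N b = A))"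
proof
  assume "\<exists>A B. A \<inter> B = {} \<and> card A = k \<and> card B = k \<and> (\<forall>a\<in>A. N a = B) \<and> (\<forall>b\<in>B. N b = A)"
  then obtain A B where AB: "A \<inter> B = {}" "card A = k" "card B = k" "\<forall>a\<in>A. N a = B" "\<forall>b\<in>B. N b = A"
    by blast
  have "A \<noteq> {}" "B \<noteq> {}" using AB(2,3) k3 by auto
  then obtain a b where aA: "a \<in> A" and bB: "b \<in> B" by blast
  have BV: "B \<subseteq> V" using AB(4) aA N_sub by metis
  have AV: "A \<subseteq> V" using AB(5) bB N_sub by metis
  have aV: "a \<in> V" using aA AV by blast
  have cl: "y \<in> A \<union> B" if "x \<in> A \<union> B" "E x y" for x y
  proof -
    have "y \<in> N x" using that(2) mem_N by blast
    then show ?thesis using that(1) AB(4,5) by blast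
  qed
  have VAB: "V \<subseteq> A \<union> B"
  proof
    fix v assume vV: "v \<in> V"
    have "(a, v) \<in> {(x,y). E x y}\<^sup>*" using conn aV vV by (auto simp: connected_graph_def)
    then show "v \<in> A \<union> B"
    proof (induction rule: rtrancl_induct)
      case base
      then show ?case using aA by blast
    next
      case (step y z)
      then show ?case using cl by blast
    qed
  qed
  have edges: "\<forall>u v. E u v \<longleftrightarrow> (u \<in> A \<and> v \<in> B) \<or> (u \<in> B \<and> v \<in> A)"
  proof (intro allI iffI)
    fix u v
    assume e: "E u v"
    then have "u \<in> A \<union> B" "v \<in> N u" using Ein VAB mem_N by auto
    then show "u \<in> A \<and> v \<in> B \<or> u \<in> B \<and> v \<in> A" using AB(4,5) by blast
  next
    fix u v
    assume "u \<in> A \<and> v \<in> B \<or> u \<in> B \<and> v \<in> A"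
    then have "v \<in> N u" using AB(4,5) by blast
    then show "E u v" using mem_N by blast
  qed
  have "A \<union> B = V" using AV BV VAB by blast
  then have "is_complete_bipartite_kk V E k"
    unfolding is_complete_bipartite_kk_def using AB(1,2,3) edges by blast
  with nk show False by simp
qed

lemma reach_all:
  assumes conn: "connected_graph V E" and "u \<in> V" "v \<in> V"
  shows "\<exists>b. wk u b v"
  using assms reach_wk by (auto simp: connected_graph_def)

lemma nonbip_wk:
  assumes conn: "connected_graph V E" and nb: "\<not> bipartite V E" and d: "d \<in> V" and t: "t \<in> V"
  shows "wk d True t"
proof -
  have both: "\<exists>v. wk d True v \<and> wk d False v"
  proof (rule ccontr)
    assume nboth: "\<not> (\<exists>v. wk d True v \<and> wk d False v)"
    define A where "A = {v\<in>V. wk d True v}"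
    have "bipartite V E"
      unfolding bipartite_def
    proof (intro exI[of _ A] conjI allI impI)
      show "A \<subseteq> V" by (auto simp: A_def)
      fix u w assume e: "E u w"
      have uV: "u \<in> V" and wV: "w \<in> V" using Ein e by auto
      obtain b where bu: "wk d b u" using reach_all[OF conn d uV] by blast
      have bw: "wk d (\<not> b) w" using wk.ws[OF bu e] .
      have uA: "u \<in> A \<longleftrightarrow> b" using bu nboth uV by (cases b) (auto simp: A_def)
      have wA: "w \<in> A \<longleftrightarrow> \<not> b" using bw nboth wV by (cases b) (auto simp: A_def)
      show "u \<in> A \<longleftrightarrow> w \<notin> A" using uA wA by blast
    qed
    with nb show False by simp
  qed
  then obtain v where v: "wk d True v" "wk d False v" by blast
  have "wk v False d" using wk_rev[OF v(2)] .
  from wk_trans[OF this v(1)] have loop: "wk d False d" by simp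
  obtain b where b: "wk d b t" using reach_all[OF conn d t] by blast
  show ?thesis
  proof (cases b)
    case True
    then show ?thesis using b by simp
  next
    case False
    from wk_trans[OF b loop] show ?thesis using False by simp
  qed
qed

lemma wk_side:
  assumes A: "\<forall>u v. E u v \<longrightarrow> (u \<in> A \<longleftrightarrow> v \<notin> A)"
  shows "wk d b v \<Longrightarrow> (v \<in> A \<longleftrightarrow> (d \<in> A \<longleftrightarrow> b))"
proof (induction rule: wk.induct)
  case w0
  then show ?case by simp
next
  case (ws b u w)
  then show ?case using A by blast
qed

lemma legal_app:
  "legal_sequence V E S2 \<Longrightarrow> set S1 \<inter> set S2 = {} \<Longrightarrow> DD S1 \<inter> DD S2 = {} \<Longrightarrow>
   legal_sequence V E S1 \<Longrightarrow> legal_sequence V E (S1 @ S2)"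
proof (induction S2 rule: rev_induct)
  case Nil
  then show ?case by simp
next
  case (snoc x S2)
  have l2: "legal_sequence V E S2" and xS2: "x \<notin> set S2" and xV: "x \<in> V"
    and fp: "S2 \<noteq> [] \<longrightarrow> N x - DD S2 \<noteq> {}"
    using snoc.prems(1) legal_snoc by auto
  have d1: "set S1 \<inter> set S2 = {}" using snoc.prems(2) by auto
  have d2: "DD S1 \<inter> DD S2 = {}" using snoc.prems(3) by (auto simp: DD_snoc)
  have IH: "legal_sequence V E (S1 @ S2)" using snoc.IH[OF l2 d1 d2 snoc.prems(4)] .
  have xS: "x \<notin> set (S1 @ S2)" using xS2 snoc.prems(2) by auto
  have NxS1: "N x \<inter> DD S1 = {}" using snoc.prems(3) by (auto simp: DD_snoc)
  have "N x - DD (S1 @ S2) \<noteq> {}"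
  proof (cases "S2 = []")
    case True
    then show ?thesis using N_ne[OF xV] NxS1 by (auto simp: DD_app DD_def)
  next
    case False
    then obtain e where "e \<in> N x" "e \<notin> DD S2" using fp by blast
    then show ?thesis using NxS1 by (auto simp: DD_app)
  qed
  then show ?case using legal_snoc[of "S1 @ S2" x] IH xS xV by simp
qed

lemma TDS:
  assumes "legal_sequence V E S" "DD S = V"
  shows "total_dominating_sequence V E S"
proof -
  have "\<forall>v\<in>V. \<exists>u\<in>set S. E u v"
  proof
    fix v assume "v \<in> V"
    then have "v \<in> DD S" using assms(2) by simp
    then obtain u where "u \<in> set S" "v \<in> N u" by (auto simp: DD_def)
    then show "\<exists>u\<in>set S. E u v" using mem_N by blast
  qed
  then show ?thesis using assms(1)
    unfolding total_dominating_sequence_def total_dominating_set_def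
    by (auto simp: legal_sequence_def)
qed

lemma grundy: "total_dominating_sequence V E S \<Longrightarrow> length S \<le> total_grundy_dom V E"
proof -
  assume h: "total_dominating_sequence V E S"
  have "{S. total_dominating_sequence V E S} \<subseteq> {S. legal_sequence V E S}"
    by (auto simp: total_dominating_sequence_def)
  then have "finite {S. total_dominating_sequence V E S}" using fin_lists finite_subset by blast
  then have "finite (length ` {S. total_dominating_sequence V E S})" by simp
  then show ?thesis unfolding total_grundy_dom_def using h by (intro Max_ge) auto
qed

lemma fin_real1:
  assumes "c + m \<le> (k-1)*L + 2" "L \<le> g"
  shows "(real c + real m - 2)/(real k - 1) \<le> real g"
proof -
  have "real (c + m) \<le> real ((k-1)*L + 2)" using assms(1) by (simp only: of_nat_le_iff)
  then have "real c + real m - 2 \<le> (real k - 1) * real L" using k3 by (simp add: of_nat_diff)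
  also have "\<dots> \<le> (real k - 1) * real g" using assms(2) k3 by (intro mult_left_mono) auto
  finally show ?thesis using k3 by (simp add: pos_divide_le_eq mult.commute)
qed

lemma fin_real2:
  assumes "c + 2*m \<le> (k-1)*L + 4" "L \<le> g"
  shows "(real c + 2 * real m - 4)/(real k - 1) \<le> real g"
proof -
  have "real (c + 2*m) \<le> real ((k-1)*L + 4)" using assms(1) by (simp only: of_nat_le_iff)
  then have "real c + 2 * real m - 4 \<le> (real k - 1) * real L" using k3 by (simp add: of_nat_diff)
  also have "\<dots> \<le> (real k - 1) * real g" using assms(2) k3 by (intro mult_left_mono) auto
  finally show ?thesis using k3 by (simp add: pos_divide_le_eq mult.commute)
qed

lemma main_loc:
  assumes conn: "connected_graph V E" and nk: "\<not> is_complete_bipartite_kk V E k"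
  shows "(\<not> bipartite V E \<longrightarrow>
            real (total_grundy_dom V E) \<ge> (real (card V) + real (nat \<lceil>real k / 2\<rceil>) - 2) / (real k - 1))
       \<and> (bipartite V E \<longrightarrow>
            real (total_grundy_dom V E) \<ge> (real (card V) + 2 * real (nat \<lceil>real k / 2\<rceil>) - 4) / (real k - 1))"
proof (intro conjI impI)
  have noK: "\<not>(\<exists>A B. A \<inter> B = {} \<and> card A = k \<and> card B = k \<and> (\<forall>a\<in>A. N a = B) \<and> (\<forall>b\<in>B. N b = A))"
    using noK_lemma[OF conn nk] .
  have ch: "nat \<lceil>real k / 2\<rceil> = k - k div 2" by (rule ceil_half)
  have Vne: "V \<noteq> {}" using conn by (simp add: connected_graph_def)
  {
    assume nb: "\<not> bipartite V E"
    have H1: "\<forall>x\<in>V. N x \<subseteq> V" using N_sub by blast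
    have H2: "\<forall>t\<in>V. \<forall>w. E t w \<longrightarrow> w \<in> V" using Ein by blast
    have H3: "\<forall>d\<in>V. \<forall>t\<in>V. wk d True t" using nonbip_wk[OF conn nb] by blast
    obtain S where S: "legal_sequence V E S" "DD S = V" "card V + (k - k div 2) \<le> (k-1) * length S + 2"
      using phase[OF subset_refl subset_refl H1 H2 H3 Vne noK] by blast
    have "length S \<le> total_grundy_dom V E" using grundy TDS S(1,2) by blast
    from fin_real1[OF S(3) this]
    show "real (total_grundy_dom V E) \<ge> (real (card V) + real (nat \<lceil>real k / 2\<rceil>) - 2) / (real k - 1)"
      unfolding ch .
  }
  {
    assume bp: "bipartite V E"
    then obtain A0 where A0: "\<forall>u v. E u v \<longrightarrow> (u \<in> A0 \<longleftrightarrow> v \<notin> A0)" by (auto simp: bipartite_def)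
    obtain d0 where d0: "d0 \<in> V" using Vne by blast
    define P where "P = {v. wk d0 True v}"
    define Q where "Q = {v. wk d0 False v}"
    have PV: "P \<subseteq> V" and QV: "Q \<subseteq> V" using wk_V d0 by (auto simp: P_def Q_def)
    have PQ: "P \<inter> Q = {}"
    proof (rule ccontr)
      assume "P \<inter> Q \<noteq> {}"
      then obtain v where "wk d0 True v" "wk d0 False v" by (auto simp: P_def Q_def)
      then show False using wk_side[OF A0] by blast
    qed
    have VPQ: "V = P \<union> Q"
    proof
      show "V \<subseteq> P \<union> Q"
      proof
        fix v assume "v \<in> V"
        then obtain b where "wk d0 b v" using reach_all[OF conn d0] by blast
        then show "v \<in> P \<union> Q" by (cases b) (auto simp: P_def Q_def)
      qed
    qed (use PV QV in blast)
    have Pne: "P \<noteq> {}" using wk.w0 by (auto simp: P_def)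
    obtain w where "w \<in> N d0" using N_ne d0 by blast
    then have "wk d0 False w" using wk_edge mem_N by blast
    then have Qne: "Q \<noteq> {}" by (auto simp: Q_def)
    have H1P: "\<forall>x\<in>Q. N x \<subseteq> P"
      using wk.ws[of d0 False] by (auto simp: P_def Q_def mem_N)
    have H2P: "\<forall>t\<in>P. \<forall>w. E t w \<longrightarrow> w \<in> Q"
      using wk.ws[of d0 True] by (auto simp: P_def Q_def)
    have H1Q: "\<forall>x\<in>P. N x \<subseteq> Q"
      using wk.ws[of d0 True] by (auto simp: P_def Q_def mem_N)
    have H2Q: "\<forall>t\<in>Q. \<forall>w. E t w \<longrightarrow> w \<in> P"
      using wk.ws[of d0 False] by (auto simp: P_def Q_def)
    have H3P: "\<forall>d\<in>P. \<forall>t\<in>P. wk d True t"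
    proof (intro ballI)
      fix d t assume "d \<in> P" "t \<in> P"
      then have "wk d0 True t" "wk d True d0" using wk_rev by (auto simp: P_def)
      from wk_trans[OF this] show "wk d True t" by simp
    qed
    have H3Q: "\<forall>d\<in>Q. \<forall>t\<in>Q. wk d True t"
    proof (intro ballI)
      fix d t assume "d \<in> Q" "t \<in> Q"
      then have "wk d0 False t" "wk d False d0" using wk_rev by (auto simp: Q_def)
      from wk_trans[OF this] show "wk d True t" by simp
    qed
    obtain S1 where S1: "legal_sequence V E S1" "set S1 \<subseteq> Q" "DD S1 = P"
      "card P + (k - k div 2) \<le> (k-1) * length S1 + 2"
      using phase[OF PV QV H1P H2P H3P Pne noK] by blast
    obtain S2 where S2: "legal_sequence V E S2" "set S2 \<subseteq> P" "DD S2 = Q"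
      "card Q + (k - k div 2) \<le> (k-1) * length S2 + 2"
      using phase[OF QV PV H1Q H2Q H3Q Qne noK] by blast
    have "set S1 \<inter> set S2 = {}" using S1(2) S2(2) PQ by blast
    moreover have "DD S1 \<inter> DD S2 = {}" using S1(3) S2(3) PQ by blast
    ultimately have lg: "legal_sequence V E (S1 @ S2)" using legal_app S1(1) S2(1) by blast
    have "DD (S1 @ S2) = V" unfolding DD_app S1(3) S2(3) using VPQ by (rule sym)
    then have "length (S1 @ S2) \<le> total_grundy_dom V E" using grundy TDS lg by blast
    then have Lg: "length S1 + length S2 \<le> total_grundy_dom V E" by simp
    have "card V = card P + card Q"
      using VPQ PQ PV QV finV by (metis card_Un_disjoint finite_subset)
    moreover have "(k-1) * (length S1 + length S2) = (k-1) * length S1 + (k-1) * length S2"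
      by (rule distrib_left)
    ultimately have "card V + 2 * (k - k div 2) \<le> (k-1) * (length S1 + length S2) + 4"
      using S1(4) S2(4) by linarith
    from fin_real2[OF this Lg]
    show "real (total_grundy_dom V E) \<ge> (real (card V) + 2 * real (nat \<lceil>real k / 2\<rceil>) - 4) / (real k - 1)"
      unfolding ch .
  }
qed

end

theorem mainTheorem13:
  fixes V :: "'a set" and E :: "'a \<Rightarrow> 'a \<Rightarrow> bool" and k :: nat
  assumes "simple_graph V E"
    and "k \<ge> 3"
    and "regular V E k"
    and "connected_graph V E"
    and "\<not> is_complete_bipartite_kk V E k"
  shows "(\<not> bipartite V E \<longrightarrow>
            real (total_grundy_dom V E) \<ge> (real (card V) + real (nat \<lceil>real k / 2\<rceil>) - 2) / (real k - 1))
       \<and> (bipartite V E \<longrightarrow>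
            real (total_grundy_dom V E) \<ge> (real (card V) + 2 * real (nat \<lceil>real k / 2\<rceil>) - 4) / (real k - 1))"
proof -
  interpret rg V E k using assms(1,2,3) by unfold_locales
  show ?thesis using main_loc assms(4,5) by blast
qed

end
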